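(* Let $\alpha$ be a probability measure on $\{0,1,2,\dots\}$ with mean $m(\alpha)<1$. Then $TGWT(\alpha)$ is the typical re-rooting of the ordered Galton-Watson tree $GW(\alpha)$ (rooted at its ancestor vertex).
   Context: A Family Tree is a directed tree in which every vertex has out-degree at most one (edges point from child to parent). $GW(\alpha)$ is the ordered (plane) Galton-Watson tree in which every vertex independently has an $\alpha$-distributed number of children, rooted at the vertex without parent. Typical re-rooting: for a random rooted Family Tree $[\mathbf{T},\mathbf{o}]$ with $\mathbb{E}[\#V(\mathbf{T})]<\infty$, it is the probability measure $\mathcal{P}'[A]=\mathbb{E}\big[\sum_{u\in V(\mathbf{T})}\mathbf{1}_A([\mathbf{T},u])\big]/\mathbb{E}[\#V(\mathbf{T})]$ on rooted (ordered) trees. $TGWT(\alpha)$: with $\hat\alpha(k)=k\alpha(k)/m(\alpha)$, it is the random rooted ordered Family Tree in which (i) the root has a parent with probability $m(\alpha)$, and independently each ancestor in turn has a parent with probability $m(\alpha)$; (ii) each ancestor of the root independently receives $Z-1$ additional children with $Z\sim\hat\alpha$, and the children of each ancestor are ordered uniformly at random; (iii) independent $GW(\alpha)$ trees are attached as descendant trees to the root and to each additional child. *)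

theory Defs
  imports "HOL-Probability.Probability"
begin

text \<open>Finite ordered (plane) trees. A vertex is addressed by the list of child
indices on the path from the top vertex (the vertex without parent).\<close>

datatype ptree = Node "ptree list"

primrec children :: "ptree \<Rightarrow> ptree list" where
  "children (Node cs) = cs"

primrec valid_addr :: "ptree \<Rightarrow> nat list \<Rightarrow> bool" where
  "valid_addr t [] = True"
| "valid_addr t (i # p) = (i < length (children t) \<and> valid_addr (children t ! i) p)"

definition vertices :: "ptree \<Rightarrow> nat list set" where
  "vertices t = {p. valid_addr t p}"

definition offspring_mean :: "nat pmf \<Rightarrow> real" where
  "offspring_mean \<alpha> = (\<Sum>k. real k * pmf \<alpha> k)"

text \<open>Probability that GW(alpha) equals the finite plane tree t:
  the product over all vertices of alpha(number of children).\<close>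
fun gw :: "nat pmf \<Rightarrow> ptree \<Rightarrow> real" where
  "gw \<alpha> (Node cs) = pmf \<alpha> (length cs) * prod_list (map (gw \<alpha>) cs)"

definition gw_expected_size :: "nat pmf \<Rightarrow> real" where
  "gw_expected_size \<alpha> = (\<Sum>\<^sub>\<infinity> t. gw \<alpha> t * real (card (vertices t)))"

text \<open>Typical re-rooting of GW(alpha): a measure on rooted ordered trees,
  represented as pairs (top tree, address of the root vertex).\<close>
definition typical_rerooting_gw :: "nat pmf \<Rightarrow> (ptree \<times> nat list) set \<Rightarrow> real" where
  "typical_rerooting_gw \<alpha> A =
     (\<Sum>\<^sub>\<infinity> t. gw \<alpha> t * real (card {u \<in> vertices t. (t, u) \<in> A})) / gw_expected_size \<alpha>"

text \<open>Probability that TGWT(alpha) equals the rooted ordered tree (t,p):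
  p lists, from the top ancestor downwards, the position of the path child
  among the children of each ancestor. Each ancestor exists with probability m
  (the top one has no parent, probability 1-m), has Z children with
  Z ~ hat alpha (probability Z alpha(Z)/m), the path child sits at a uniformly
  random position (probability 1/Z), the other children carry independent
  GW(alpha) trees, and the root carries a GW(alpha) tree.\<close>
primrec tgwt_prob :: "nat pmf \<Rightarrow> ptree \<Rightarrow> nat list \<Rightarrow> real" where
  "tgwt_prob \<alpha> t [] = (1 - offspring_mean \<alpha>) * gw \<alpha> t"
| "tgwt_prob \<alpha> t (i # p) =
     (let cs = children t; z = length cs; m = offspring_mean \<alpha> in
      if i < z then
        m * ((real z * pmf \<alpha> z / m) * (1 / real z)
             * (\<Prod>j\<in>{..<z} - {i}. gw \<alpha> (cs ! j)))
          * tgwt_prob \<alpha> (cs ! i) p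
      else 0)"

definition tgwt :: "nat pmf \<Rightarrow> (ptree \<times> nat list) set \<Rightarrow> real" where
  "tgwt \<alpha> A = (\<Sum>\<^sub>\<infinity> (t, p) \<in> A. tgwt_prob \<alpha> t p)"

end

theory Submission
  imports Defs
begin

lemma gw_nonneg: "0 \<le> gw \<alpha> t"
proof (induction t)
  case (Node cs)
  then show ?case by (auto intro!: mult_nonneg_nonneg prod_list_nonneg)
qed

lemma vertices_Node: "vertices (Node cs) = insert [] (\<Union>i<length cs. (Cons i) ` vertices (cs!i))"
  unfolding vertices_def
proof (rule set_eqI)
  fix p show "p \<in> {p. valid_addr (Node cs) p} \<longleftrightarrow> p \<in> insert [] (\<Union>i<length cs. (Cons i) ` {p. valid_addr (cs ! i) p})"
    by (cases p) auto
qed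

lemma vertices_finite: "finite (vertices t)"
proof (induction t)
  case (Node cs)
  then show ?case by (auto simp: vertices_Node)
qed

lemma card_vertices_Node: "card (vertices (Node cs)) = 1 + sum_list (map (\<lambda>c. card (vertices c)) cs)"
proof -
  have "card (\<Union>i<length cs. (Cons i) ` vertices (cs!i)) = (\<Sum>i<length cs. card ((Cons i) ` vertices (cs!i)))"
    by (rule card_UN_disjoint) (auto simp: vertices_finite)
  also have "\<dots> = (\<Sum>i<length cs. card (vertices (cs!i)))"
    by (intro sum.cong refl card_image) auto
  also have "\<dots> = sum_list (map (\<lambda>c. card (vertices c)) cs)"
    by (simp add: sum_list_sum_nth atLeast0LessThan)
  finally show ?thesis unfolding vertices_Node
    by (subst card_insert_disjoint) (auto simp: vertices_finite)
qed

abbreviation NI :: "('a \<Rightarrow> ennreal) \<Rightarrow> ennreal" where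
  "NI h \<equiv> (\<integral>\<^sup>+x. h x \<partial>count_space UNIV)"

lemma NI_pair: "NI (\<lambda>x. NI (\<lambda>y. f x y)) = NI (\<lambda>(x,y). f x y)"
  using nn_integral_fst_count_space[of "\<lambda>(x,y). f x y"] by simp

lemma list_split: "NI h = h [] + NI (\<lambda>x. NI (\<lambda>xs. h (x # xs)))"
proof -
  have "NI h = NI (\<lambda>cs. h cs * indicator {[]} cs + h cs * indicator {cs. cs \<noteq> []} cs)"
    by (intro nn_integral_cong) (auto simp: indicator_def)
  also have "\<dots> = NI (\<lambda>cs. h cs * indicator {[]} cs) + NI (\<lambda>cs. h cs * indicator {cs. cs \<noteq> []} cs)"
    by (rule nn_integral_add) auto
  also have "NI (\<lambda>cs. h cs * indicator {[]} cs) = (\<integral>\<^sup>+cs. h cs \<partial>count_space {[]})"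
    by (simp add: nn_integral_count_space_indicator)
  also have "\<dots> = h []" by (simp add: nn_integral_count_space_finite)
  also have "NI (\<lambda>cs. h cs * indicator {cs. cs \<noteq> []} cs) = (\<integral>\<^sup>+cs. h cs \<partial>count_space {cs. cs \<noteq> []})"
    by (simp add: nn_integral_count_space_indicator)
  also have "\<dots> = NI (\<lambda>(x,xs). h (x # xs))"
  proof -
    have "bij_betw (\<lambda>(x,xs). x # xs) UNIV {cs. cs \<noteq> []}"
      by (auto simp: bij_betw_def inj_on_def neq_Nil_conv image_def)
    from nn_integral_bij_count_space[OF this, of h] show ?thesis
      by (simp add: case_prod_unfold)
  qed
  also have "\<dots> = NI (\<lambda>x. NI (\<lambda>xs. h (x # xs)))"
    by (rule NI_pair[symmetric])
  finally show ?thesis .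
qed

lemma NI_prod: "NI (\<lambda>x. NI (\<lambda>y. f x * g y)) = NI f * NI g"
  by (simp add: nn_integral_cmult nn_integral_multc)

lemma list_prod:
  fixes f :: "'a \<Rightarrow> ennreal"
  shows "NI (\<lambda>cs. if length cs = z then prod_list (map f cs) else 0) = NI f ^ z"
proof (induction z)
  case 0
  show ?case by (subst list_split) simp
next
  case (Suc z)
  have "NI (\<lambda>cs. if length cs = Suc z then prod_list (map f cs) else 0)
      = NI (\<lambda>x. NI (\<lambda>xs. f x * (if length xs = z then prod_list (map f xs) else 0)))"
    by (subst list_split) (simp add: if_distrib cong: if_cong)
  also have "\<dots> = NI f * NI f ^ z" by (subst NI_prod) (simp add: Suc)
  finally show ?case by simp
qed

lemma list_sum:
  fixes f :: "'a \<Rightarrow> ennreal" and s :: "'a \<Rightarrow> nat"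
  shows "NI (\<lambda>cs. if length cs = z then prod_list (map f cs) * of_nat (sum_list (map s cs)) else 0)
     = of_nat z * NI (\<lambda>x. f x * of_nat (s x)) * NI f ^ (z - 1)"
proof (induction z)
  case 0
  show ?case by (subst list_split) simp
next
  case (Suc z)
  let ?g = "\<lambda>xs. if length xs = z then prod_list (map f xs) else 0"
  let ?k = "\<lambda>xs. if length xs = z then prod_list (map f xs) * of_nat (sum_list (map s xs)) else 0"
  have "NI (\<lambda>cs. if length cs = Suc z then prod_list (map f cs) * of_nat (sum_list (map s cs)) else 0)
      = NI (\<lambda>x. NI (\<lambda>xs. (f x * of_nat (s x)) * ?g xs + f x * ?k xs))"
    by (subst list_split) (auto intro!: nn_integral_cong simp: algebra_simps)
  also have "\<dots> = NI (\<lambda>x. NI (\<lambda>xs. (f x * of_nat (s x)) * ?g xs) + NI (\<lambda>xs. f x * ?k xs))"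
    by (intro nn_integral_cong nn_integral_add) auto
  also have "\<dots> = NI (\<lambda>x. NI (\<lambda>xs. (f x * of_nat (s x)) * ?g xs)) + NI (\<lambda>x. NI (\<lambda>xs. f x * ?k xs))"
    by (rule nn_integral_add) auto
  also have "\<dots> = NI (\<lambda>x. f x * of_nat (s x)) * NI f ^ z + NI f * (of_nat z * NI (\<lambda>x. f x * of_nat (s x)) * NI f ^ (z - 1))"
    by (simp only: NI_prod list_prod Suc)
  also have "\<dots> = of_nat (Suc z) * NI (\<lambda>x. f x * of_nat (s x)) * NI f ^ (Suc z - 1)"
    by (cases z) (auto simp: algebra_simps)
  finally show ?case .
qed

definition gwE :: "nat pmf \<Rightarrow> ptree \<Rightarrow> ennreal" where
  "gwE \<alpha> t = ennreal (gw \<alpha> t)"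

definition sz :: "ptree \<Rightarrow> nat" where
  "sz t = card (vertices t)"

definition fB :: "nat pmf \<Rightarrow> ptree set \<Rightarrow> ptree \<Rightarrow> ennreal" where
  "fB \<alpha> B t = indicator B t * gwE \<alpha> t"

lemma sz_Node: "sz (Node cs) = 1 + sum_list (map sz cs)"
  unfolding sz_def by (simp add: card_vertices_Node)

lemma ennreal_prod_list: assumes "\<And>x. 0 \<le> g x" shows "ennreal (prod_list (map g cs)) = prod_list (map (\<lambda>x. ennreal (g x)) cs)"
proof (induction cs)
  case (Cons a cs)
  have "0 \<le> prod_list (map g cs)" by (rule prod_list_nonneg) (auto simp: assms)
  then show ?case using Cons by (simp add: ennreal_mult assms)
qed simp

lemma prod_list_fB: "prod_list (map (fB \<alpha> B) cs) = indicator {cs. set cs \<subseteq> B} cs * prod_list (map (gwE \<alpha>) cs)"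
  by (induction cs) (auto simp: fB_def indicator_def)

lemma node_val: "indicator {t. set (children t) \<subseteq> B} (Node cs) * gwE \<alpha> (Node cs)
   = ennreal (pmf \<alpha> (length cs)) * prod_list (map (fB \<alpha> B) cs)"
proof -
  have "gwE \<alpha> (Node cs) = ennreal (pmf \<alpha> (length cs)) * prod_list (map (gwE \<alpha>) cs)"
  proof -
    have "0 \<le> prod_list (map (gw \<alpha>) cs)" by (rule prod_list_nonneg) (auto simp: gw_nonneg)
    then show ?thesis unfolding gwE_def by (simp add: ennreal_mult ennreal_prod_list[of "gw \<alpha>", OF gw_nonneg])
  qed
  then show ?thesis by (simp add: prod_list_fB indicator_def)
qed

lemma NI_Node: "NI h = NI (\<lambda>cs. h (Node cs))"
proof -
  have "bij_betw Node UNIV UNIV"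
    by (auto simp: bij_betw_def inj_on_def image_def intro: ptree.exhaust)
  from nn_integral_bij_count_space[OF this, of h] show ?thesis by simp
qed

lemma NI_by_length: "NI h = (\<Sum>z. NI (\<lambda>cs. if length cs = z then h cs else 0))"
proof -
  have "NI h = NI (\<lambda>cs. \<Sum>z. (if length cs = z then h cs else 0))"
  proof (intro nn_integral_cong)
    fix cs :: "'a list"
    have "(\<Sum>z. (if length cs = z then h cs else 0)) = (\<Sum>z\<in>{length cs}. (if length cs = z then h cs else 0))"
      by (rule suminf_finite) auto
    then show "h cs = (\<Sum>z. (if length cs = z then h cs else 0))" by simp
  qed
  also have "\<dots> = (\<Sum>z. NI (\<lambda>cs. if length cs = z then h cs else 0))"
    by (rule nn_integral_suminf) auto
  finally show ?thesis .
qed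

lemma gen_S: "NI (\<lambda>t. indicator {t. set (children t) \<subseteq> B} t * gwE \<alpha> t)
    = (\<Sum>z. ennreal (pmf \<alpha> z) * NI (fB \<alpha> B) ^ z)"
proof -
  have "NI (\<lambda>t. indicator {t. set (children t) \<subseteq> B} t * gwE \<alpha> t)
     = NI (\<lambda>cs. ennreal (pmf \<alpha> (length cs)) * prod_list (map (fB \<alpha> B) cs))"
    by (subst NI_Node) (simp add: node_val)
  also have "\<dots> = (\<Sum>z. NI (\<lambda>cs. ennreal (pmf \<alpha> z) * (if length cs = z then prod_list (map (fB \<alpha> B) cs) else 0)))"
    by (subst NI_by_length) (auto intro!: suminf_cong nn_integral_cong)
  also have "\<dots> = (\<Sum>z. ennreal (pmf \<alpha> z) * NI (fB \<alpha> B) ^ z)"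
    by (subst nn_integral_cmult) (auto simp: list_prod)
  finally show ?thesis .
qed

lemma gen_E: "NI (\<lambda>t. indicator {t. set (children t) \<subseteq> B} t * gwE \<alpha> t * of_nat (sz t))
    = (\<Sum>z. ennreal (pmf \<alpha> z) * (NI (fB \<alpha> B) ^ z + of_nat z * NI (\<lambda>t. fB \<alpha> B t * of_nat (sz t)) * NI (fB \<alpha> B) ^ (z - 1)))"
proof -
  have "NI (\<lambda>t. indicator {t. set (children t) \<subseteq> B} t * gwE \<alpha> t * of_nat (sz t))
     = NI (\<lambda>cs. ennreal (pmf \<alpha> (length cs)) * (prod_list (map (fB \<alpha> B) cs) + prod_list (map (fB \<alpha> B) cs) * of_nat (sum_list (map sz cs))))"
  proof (subst NI_Node, intro nn_integral_cong)
    fix cs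
    have "indicator {t. set (children t) \<subseteq> B} (Node cs) * gwE \<alpha> (Node cs) * of_nat (sz (Node cs))
       = (indicator {t. set (children t) \<subseteq> B} (Node cs) * gwE \<alpha> (Node cs)) * (1 + of_nat (sum_list (map sz cs)))"
      by (simp add: sz_Node)
    also have "\<dots> = ennreal (pmf \<alpha> (length cs)) * (prod_list (map (fB \<alpha> B) cs) + prod_list (map (fB \<alpha> B) cs) * of_nat (sum_list (map sz cs)))"
      by (simp only: node_val) (simp add: algebra_simps)
    finally show "indicator {t. set (children t) \<subseteq> B} (Node cs) * gwE \<alpha> (Node cs) * of_nat (sz (Node cs)) = \<dots>" .
  qed
  also have "\<dots> = (\<Sum>z. NI (\<lambda>cs. ennreal (pmf \<alpha> z) * ((if length cs = z then prod_list (map (fB \<alpha> B) cs) else 0)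
         + (if length cs = z then prod_list (map (fB \<alpha> B) cs) * of_nat (sum_list (map sz cs)) else 0))))"
    by (subst NI_by_length) (auto intro!: suminf_cong nn_integral_cong)
  also have "\<dots> = (\<Sum>z. ennreal (pmf \<alpha> z) * (NI (fB \<alpha> B) ^ z + of_nat z * NI (\<lambda>t. fB \<alpha> B t * of_nat (sz t)) * NI (fB \<alpha> B) ^ (z - 1)))"
    by (subst nn_integral_cmult, simp, subst nn_integral_add) (auto simp: list_prod list_sum)
  finally show ?thesis .
qed

lemma pmf_sum_enn: "(\<Sum>z. ennreal (pmf \<alpha> z)) = 1"
proof -
  have "(\<Sum>z. ennreal (pmf \<alpha> z)) = (\<integral>\<^sup>+ x. pmf \<alpha> x \<partial>count_space UNIV)"
    by (simp add: nn_integral_count_space_nat)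
  also have "\<dots> = 1" by (simp add: nn_integral_pmf measure_pmf.emeasure_space_1[simplified])
  finally show ?thesis .
qed

lemma pmf_summable: "summable (pmf (\<alpha>::nat pmf))"
  by (rule summable_suminf_not_top) (auto simp: pmf_sum_enn)

lemma pmf_sum: "(\<Sum>z. pmf (\<alpha>::nat pmf) z) = 1"
  using suminf_ennreal2[of "pmf \<alpha>", OF pmf_nonneg pmf_summable] by (simp add: pmf_sum_enn)

lemma mean_enn:
  assumes "summable (\<lambda>k. real k * pmf \<alpha> k)"
  shows "(\<Sum>z. ennreal (pmf \<alpha> z) * of_nat z) = ennreal (offspring_mean \<alpha>)"
proof -
  have "(\<Sum>z. ennreal (pmf \<alpha> z) * of_nat z) = (\<Sum>z. ennreal (real z * pmf \<alpha> z))"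
    by (intro suminf_cong) (simp add: ennreal_of_nat_eq_real_of_nat ennreal_mult mult.commute)
  also have "\<dots> = ennreal (offspring_mean \<alpha>)"
    unfolding offspring_mean_def by (rule suminf_ennreal2) (auto simp: assms)
  finally show ?thesis .
qed

primrec Tset :: "nat \<Rightarrow> ptree set" where
  "Tset 0 = {}"
| "Tset (Suc n) = {t. set (children t) \<subseteq> Tset n}"

lemma Tset_Suc: "Tset n \<subseteq> Tset (Suc n)"
  by (induction n) auto

lemma Tset_mono: "incseq Tset"
  by (rule incseq_SucI) (rule Tset_Suc)

lemma Tset_fin: "finite S \<Longrightarrow> \<forall>x\<in>S. \<exists>n. x \<in> Tset n \<Longrightarrow> \<exists>n. \<forall>x\<in>S. x \<in> Tset n"
proof (induction S rule: finite_induct)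
  case (insert x F)
  then obtain n m where "\<forall>y\<in>F. y \<in> Tset n" "x \<in> Tset m" by auto
  then have "\<forall>y\<in>insert x F. y \<in> Tset (max n m)"
    using Tset_mono unfolding incseq_def by (metis insert_iff max.cobounded1 max.cobounded2 subsetD)
  then show ?case by blast
qed simp

lemma Tset_cover: "\<exists>n. t \<in> Tset n"
proof (induction t)
  case (Node cs)
  then obtain n where "\<forall>x\<in>set cs. x \<in> Tset n" using Tset_fin[of "set cs"] by auto
  then have "Node cs \<in> Tset (Suc n)" by auto
  then show ?case by blast
qed

lemma NI_SUP: "NI g = (SUP n. NI (\<lambda>t. indicator (Tset n) t * g t))"
proof -
  have "NI (\<lambda>t. SUP n. indicator (Tset n) t * g t) = (SUP n. NI (\<lambda>t. indicator (Tset n) t * g t))"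
  proof (rule nn_integral_monotone_convergence_SUP)
    show "incseq (\<lambda>n t. indicator (Tset n) t * g t)"
      using Tset_mono unfolding incseq_def
      by (auto intro!: le_funI mult_right_mono simp: indicator_def) blast
  qed auto
  moreover have "(SUP n. indicator (Tset n) t * g t) = g t" for t
  proof (rule antisym)
    show "(SUP n. indicator (Tset n) t * g t) \<le> g t"
      by (rule SUP_least) (auto simp: indicator_def)
    obtain n where "t \<in> Tset n" using Tset_cover by blast
    then show "g t \<le> (SUP n. indicator (Tset n) t * g t)"
      by (intro SUP_upper2[of n]) auto
  qed
  ultimately show ?thesis by simp
qed

locale subcrit =
  fixes \<alpha> :: "nat pmf"
  assumes summ: "summable (\<lambda>k. real k * pmf \<alpha> k)"
    and sub: "offspring_mean \<alpha> < 1"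
begin

abbreviation "m \<equiv> offspring_mean \<alpha>"
abbreviation "C \<equiv> 1 / (1 - m)"

lemma m_nonneg: "0 \<le> m"
  unfolding offspring_mean_def by (rule suminf_nonneg[OF summ]) simp

lemma C_eq: "1 + C * m = C"
  using sub by (simp add: field_simps)

lemma C_pos: "0 < C" using sub by simp

lemma fB_Suc: "fB \<alpha> (Tset (Suc n)) t = indicator {t. set (children t) \<subseteq> Tset n} t * gwE \<alpha> t"
  by (simp add: fB_def)

lemma step_S:
  assumes "s \<le> 1"
  shows "(\<Sum>z. ennreal (pmf \<alpha> z) * s ^ z) \<le> 1"
proof -
  have "(\<Sum>z. ennreal (pmf \<alpha> z) * s ^ z) \<le> (\<Sum>z. ennreal (pmf \<alpha> z))"
  proof (intro suminf_le summableI)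
    fix z
    have "ennreal (pmf \<alpha> z) * s ^ z \<le> ennreal (pmf \<alpha> z) * 1"
      by (intro mult_left_mono power_le_one assms) auto
    then show "ennreal (pmf \<alpha> z) * s ^ z \<le> ennreal (pmf \<alpha> z)" by simp
  qed
  then show ?thesis by (simp add: pmf_sum_enn)
qed

lemma step_E:
  assumes "s \<le> 1" "e \<le> ennreal C"
  shows "(\<Sum>z. ennreal (pmf \<alpha> z) * (s ^ z + of_nat z * e * s ^ (z - 1))) \<le> ennreal C"
proof -
  have "(\<Sum>z. ennreal (pmf \<alpha> z) * (s ^ z + of_nat z * e * s ^ (z - 1)))
      \<le> (\<Sum>z. ennreal (pmf \<alpha> z) + ennreal C * (ennreal (pmf \<alpha> z) * of_nat z))"
  proof (intro suminf_le summableI)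
    fix z
    have "s ^ z + of_nat z * e * s ^ (z - 1) \<le> 1 + of_nat z * ennreal C * 1"
      by (intro add_mono mult_mono power_le_one assms) auto
    then show "ennreal (pmf \<alpha> z) * (s ^ z + of_nat z * e * s ^ (z - 1)) \<le> ennreal (pmf \<alpha> z) + ennreal C * (ennreal (pmf \<alpha> z) * of_nat z)"
      by (metis (no_types, lifting) distrib_left mult.assoc mult.commute mult.right_neutral mult_left_mono zero_le)
  qed
  also have "\<dots> = (\<Sum>z. ennreal (pmf \<alpha> z)) + ennreal C * (\<Sum>z. ennreal (pmf \<alpha> z) * of_nat z)"
    by (subst ennreal_suminf_cmult[symmetric], subst suminf_add) (auto intro: summableI)
  also have "\<dots> = 1 + ennreal C * ennreal m"
    by (simp add: pmf_sum_enn mean_enn[OF summ])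
  also have "\<dots> = ennreal (1 + C * m)"
    using m_nonneg C_pos by (simp add: ennreal_mult[symmetric] ennreal_plus[symmetric] ennreal_1[symmetric] del: ennreal_plus ennreal_1)
  also have "\<dots> = ennreal C" by (simp only: C_eq)
  finally show ?thesis .
qed

lemma trunc_bounds:
  "NI (fB \<alpha> (Tset n)) \<le> 1 \<and> NI (\<lambda>t. fB \<alpha> (Tset n) t * of_nat (sz t)) \<le> ennreal C"
proof (induction n)
  case 0
  then show ?case by (simp add: fB_def)
next
  case (Suc n)
  have "NI (fB \<alpha> (Tset (Suc n))) = (\<Sum>z. ennreal (pmf \<alpha> z) * NI (fB \<alpha> (Tset n)) ^ z)"
    unfolding fB_Suc by (rule gen_S)
  moreover have "NI (\<lambda>t. fB \<alpha> (Tset (Suc n)) t * of_nat (sz t)) = (\<Sum>z. ennreal (pmf \<alpha> z) * (NI (fB \<alpha> (Tset n)) ^ z + of_nat z * NI (\<lambda>t. fB \<alpha> (Tset n) t * of_nat (sz t)) * NI (fB \<alpha> (Tset n)) ^ (z - 1)))"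
    unfolding fB_Suc by (rule gen_E)
  ultimately show ?case using Suc step_S step_E by auto
qed

end

context subcrit begin

lemma fB_UNIV: "fB \<alpha> UNIV = gwE \<alpha>"
  by (simp add: fB_def fun_eq_iff)

lemma S_le: "NI (gwE \<alpha>) \<le> 1"
  using trunc_bounds by (subst NI_SUP) (auto intro!: SUP_least simp: fB_def)

lemma E_le: "NI (\<lambda>t. gwE \<alpha> t * of_nat (sz t)) \<le> ennreal C"
  using trunc_bounds by (subst NI_SUP) (auto intro!: SUP_least simp: fB_def mult.assoc)

lemma S_eq: "NI (gwE \<alpha>) = (\<Sum>z. ennreal (pmf \<alpha> z) * NI (gwE \<alpha>) ^ z)"
  using gen_S[of UNIV \<alpha>] by (simp add: fB_UNIV)

lemma E_eq: "NI (\<lambda>t. gwE \<alpha> t * of_nat (sz t)) = (\<Sum>z. ennreal (pmf \<alpha> z) * (NI (gwE \<alpha>) ^ z + of_nat z * NI (\<lambda>t. gwE \<alpha> t * of_nat (sz t)) * NI (gwE \<alpha>) ^ (z - 1)))"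
  using gen_E[of UNIV \<alpha>] by (simp add: fB_UNIV)

lemma S_one: "NI (gwE \<alpha>) = 1"
proof -
  define s where "s = enn2real (NI (gwE \<alpha>))"
  have Ss: "NI (gwE \<alpha>) = ennreal s" using S_le unfolding s_def
    by (metis ennreal_enn2real ennreal_one_less_top le_less_trans less_imp_neq)
  have s0: "0 \<le> s" unfolding s_def by simp
  have s1: "s \<le> 1" using S_le Ss by (simp add: ennreal_le_1) 
  have summ1: "summable (\<lambda>z. pmf \<alpha> z * s ^ z)"
  proof (rule summable_comparison_test[OF _ pmf_summable])
    show "\<exists>N. \<forall>n\<ge>N. norm (pmf \<alpha> n * s ^ n) \<le> pmf \<alpha> n"
      using s0 s1 by (auto intro!: exI[of _ 0] mult_right_le_one_le power_le_one)
  qed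
  have "ennreal s = (\<Sum>z. ennreal (pmf \<alpha> z) * ennreal s ^ z)" using S_eq Ss by simp
  also have "\<dots> = (\<Sum>z. ennreal (pmf \<alpha> z * s ^ z))"
    using s0 by (simp add: ennreal_power ennreal_mult)
  also have "\<dots> = ennreal (\<Sum>z. pmf \<alpha> z * s ^ z)"
    using s0 by (intro suminf_ennreal2 summ1) auto
  finally have seq: "s = (\<Sum>z. pmf \<alpha> z * s ^ z)"
    using s0 by (subst (asm) ennreal_inj) (auto intro!: suminf_nonneg summ1)
  have "(\<Sum>z. pmf \<alpha> z + (s - 1) * (real z * pmf \<alpha> z)) \<le> (\<Sum>z. pmf \<alpha> z * s ^ z)"
  proof (rule suminf_le)
    fix z
    have "1 + real z * (s - 1) \<le> (1 + (s - 1)) ^ z"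
      using s0 by (intro Bernoulli_inequality) auto
    then have "pmf \<alpha> z * (1 + real z * (s - 1)) \<le> pmf \<alpha> z * s ^ z"
      by (intro mult_left_mono) auto
    then show "pmf \<alpha> z + (s - 1) * (real z * pmf \<alpha> z) \<le> pmf \<alpha> z * s ^ z"
      by (simp add: algebra_simps)
  qed (auto intro!: summable_add summable_mult summ summ1 pmf_summable)
  also have "(\<Sum>z. pmf \<alpha> z + (s - 1) * (real z * pmf \<alpha> z)) = 1 + (s - 1) * m"
    unfolding offspring_mean_def
    by (subst suminf_add[symmetric]) (auto intro!: summable_mult summ pmf_summable simp: pmf_sum suminf_mult[OF summ])
  finally have "1 + (s - 1) * m \<le> s" using seq by simp
  then have "(1 - m) * (1 - s) \<le> 0" by (simp add: algebra_simps)
  then have "s \<ge> 1" using sub s1 by (simp add: mult_le_0_iff)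
  then show ?thesis using s1 Ss by simp
qed

lemma E_val: "NI (\<lambda>t. gwE \<alpha> t * of_nat (sz t)) = ennreal C"
proof -
  define e where "e = enn2real (NI (\<lambda>t. gwE \<alpha> t * of_nat (sz t)))"
  have Ee: "NI (\<lambda>t. gwE \<alpha> t * of_nat (sz t)) = ennreal e" using E_le unfolding e_def
    by (metis ennreal_enn2real ennreal_less_top le_less_trans less_imp_neq)
  have e0: "0 \<le> e" unfolding e_def by simp
  have "ennreal e = (\<Sum>z. ennreal (pmf \<alpha> z) + ennreal e * (ennreal (pmf \<alpha> z) * of_nat z))"
    using E_eq unfolding S_one Ee by (simp add: algebra_simps)
  also have "\<dots> = (\<Sum>z. ennreal (pmf \<alpha> z)) + ennreal e * (\<Sum>z. ennreal (pmf \<alpha> z) * of_nat z)"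
    by (subst ennreal_suminf_cmult[symmetric], subst suminf_add) (auto intro: summableI)
  also have "\<dots> = ennreal (1 + e * m)"
    using e0 m_nonneg by (simp add: pmf_sum_enn mean_enn[OF summ] ennreal_mult[symmetric] ennreal_plus[symmetric] ennreal_1[symmetric] del: ennreal_plus ennreal_1)
  finally have "e = 1 + e * m" using e0 m_nonneg by (subst (asm) ennreal_inj) auto
  then have "e = C" using sub by (simp add: field_simps)
  then show ?thesis using Ee by simp
qed

end

lemma infsum_NI:
  fixes f :: "'a \<Rightarrow> real"
  assumes "\<And>x. x \<in> A \<Longrightarrow> 0 \<le> f x" "(\<integral>\<^sup>+x. ennreal (f x) \<partial>count_space A) \<noteq> \<infinity>"
  shows "infsum f A = enn2real (\<integral>\<^sup>+x. ennreal (f x) \<partial>count_space A)"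
proof -
  have "(\<integral>\<^sup>+x. ennreal (norm (f x)) \<partial>count_space A) = (\<integral>\<^sup>+x. ennreal (f x) \<partial>count_space A)"
    using assms(1) by (intro nn_integral_cong) auto
  then have "integrable (count_space A) f"
    using assms(2) by (intro integrableI_bounded) (auto simp: top.not_eq_extremum)
  then have as: "Infinite_Set_Sum.abs_summable_on f A" by (simp add: abs_summable_on_def)
  have "infsum f A = infsetsum f A" using infsetsum_infsum[OF as] by simp
  also have "\<dots> = enn2real (\<integral>\<^sup>+x. ennreal (f x) \<partial>count_space A)"
    using assms by (intro infsetsum_conv_nn_integral) auto
  finally show ?thesis .
qed

lemma prod_list_nth: "prod_list (xs :: real list) = (\<Prod>i<length xs. xs ! i)"
  by (simp add: prod.list_conv_set_nth atLeast0LessThan)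

lemma aux_field: "(m::real) \<noteq> 0 \<Longrightarrow> z \<noteq> 0 \<Longrightarrow> m * ((z * a / m) * (1 / z) * R) = a * R"
  by (simp add: field_simps)

context subcrit begin

lemma pmf_zero_if_m0: "m = 0 \<Longrightarrow> 0 < z \<Longrightarrow> pmf \<alpha> z = 0"
proof -
  assume "m = 0" "0 < z"
  then have "\<forall>n. real n * pmf \<alpha> n = 0" using suminf_eq_zero_iff[OF summ] unfolding offspring_mean_def by auto
  then have "real z * pmf \<alpha> z = 0" by blast
  with \<open>0 < z\<close> show "pmf \<alpha> z = 0" by simp
qed

lemma tgwt_prob_eq: "tgwt_prob \<alpha> t p = (if valid_addr t p then (1 - m) * gw \<alpha> t else 0)"
proof (induction p arbitrary: t)
  case Nil
  then show ?case by simp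
next
  case (Cons i p)
  obtain cs where t: "t = Node cs" by (cases t)
  show ?case
  proof (cases "i < length cs")
    case False
    then show ?thesis by (simp add: t Let_def)
  next
    case True
    let ?z = "length cs"
    let ?R = "\<Prod>j\<in>{..<?z} - {i}. gw \<alpha> (cs ! j)"
    have split: "prod_list (map (gw \<alpha>) cs) = gw \<alpha> (cs ! i) * ?R"
      using True by (simp add: prod_list_nth prod.remove[of "{..<?z}" i])
    show ?thesis
    proof (cases "m = 0")
      case True
      have "pmf \<alpha> ?z = 0" using True \<open>i < ?z\<close> by (intro pmf_zero_if_m0) auto
      with True show ?thesis by (simp add: t Let_def)
    next
      case False
      have "m * ((real ?z * pmf \<alpha> ?z / m) * (1 / real ?z) * ?R) = pmf \<alpha> ?z * ?R"
        using False True by (intro aux_field) auto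
      then show ?thesis using True Cons.IH[of "cs ! i"]
        by (simp add: t Let_def split algebra_simps)
    qed
  qed
qed

end

lemma ennreal_mult_nat: "0 \<le> a \<Longrightarrow> ennreal (a * real k) = ennreal a * of_nat k"
  by (metis ennreal_mult ennreal_of_nat_eq_real_of_nat of_nat_0_le_iff)

theorem proposition4p17:
  fixes \<alpha> :: "nat pmf"
  assumes "summable (\<lambda>k. real k * pmf \<alpha> k)"
    and "offspring_mean \<alpha> < 1"
  shows "\<forall>A. tgwt \<alpha> A = typical_rerooting_gw \<alpha> A"
proof
  fix A :: "(ptree \<times> nat list) set"
  interpret subcrit \<alpha> using assms by unfold_locales
  define K where "K t = card {u \<in> vertices t. (t, u) \<in> A}" for t
  define X where "X = NI (\<lambda>t. gwE \<alpha> t * of_nat (K t))"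
  have Kle: "K t \<le> sz t" for t
    unfolding K_def sz_def by (intro card_mono vertices_finite) auto
  have Xle: "X \<le> ennreal C"
  proof -
    have "X \<le> NI (\<lambda>t. gwE \<alpha> t * of_nat (sz t))"
      unfolding X_def by (intro nn_integral_mono mult_left_mono) (simp_all add: Kle)
    then show ?thesis using E_val by simp
  qed
  have "X < \<top>" using Xle ennreal_less_top[of C] by (rule le_less_trans)
  then have Xfin: "X \<noteq> \<infinity>" by simp
  have m1: "0 \<le> 1 - m" using sub by simp
  define g where "g = (\<lambda>(t, p). if valid_addr t p then (1 - m) * gw \<alpha> t else 0)"
  have g0: "0 \<le> g x" for x using m1 gw_nonneg unfolding g_def by (auto split: prod.splits)
  have inner: "NI (\<lambda>p. ennreal (g (t, p)) * indicator A (t, p)) = ennreal (1 - m) * (gwE \<alpha> t * of_nat (K t))" for t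
  proof -
    have "NI (\<lambda>p. ennreal (g (t, p)) * indicator A (t, p)) = NI (\<lambda>p. ennreal ((1 - m) * gw \<alpha> t) * indicator {u \<in> vertices t. (t, u) \<in> A} p)"
      unfolding g_def by (intro nn_integral_cong) (auto simp: vertices_def indicator_def)
    also have "\<dots> = ennreal ((1 - m) * gw \<alpha> t) * of_nat (K t)"
      by (subst nn_integral_cmult) (auto simp: K_def vertices_finite)
    finally show ?thesis using m1 gw_nonneg by (simp add: gwE_def ennreal_mult mult.assoc)
  qed
  have LHSint: "(\<integral>\<^sup>+x. ennreal (g x) \<partial>count_space A) = ennreal (1 - m) * X"
  proof -
    have "(\<integral>\<^sup>+x. ennreal (g x) \<partial>count_space A) = NI (\<lambda>x. ennreal (g x) * indicator A x)"
      by (simp add: nn_integral_count_space_indicator)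
    also have "\<dots> = NI (\<lambda>t. NI (\<lambda>p. ennreal (g (t, p)) * indicator A (t, p)))"
      using NI_pair[of "\<lambda>t p. ennreal (g (t, p)) * indicator A (t, p)"] by (simp add: case_prod_beta')
    also have "\<dots> = ennreal (1 - m) * X"
      unfolding inner X_def by (rule nn_integral_cmult) simp
    finally show ?thesis .
  qed
  have "tgwt \<alpha> A = infsum g A"
    unfolding tgwt_def g_def by (intro infsum_cong) (auto simp: tgwt_prob_eq)
  also have "\<dots> = enn2real (ennreal (1 - m) * X)"
    using g0 LHSint Xfin by (subst infsum_NI) (auto simp: ennreal_mult_eq_top_iff)
  also have "\<dots> = (1 - m) * enn2real X"
    using m1 by (simp add: enn2real_mult)
  finally have L: "tgwt \<alpha> A = (1 - m) * enn2real X" .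
  have "(\<Sum>\<^sub>\<infinity> t. gw \<alpha> t * real (K t)) = enn2real X"
  proof -
    have eq: "(\<integral>\<^sup>+t. ennreal (gw \<alpha> t * real (K t)) \<partial>count_space UNIV) = X"
      unfolding X_def using gw_nonneg
      by (intro nn_integral_cong) (simp add: gwE_def ennreal_mult_nat)
    show ?thesis using gw_nonneg Xfin by (subst infsum_NI) (auto simp: eq)
  qed
  moreover have "gw_expected_size \<alpha> = C"
  proof -
    have eq: "(\<integral>\<^sup>+t. ennreal (gw \<alpha> t * real (card (vertices t))) \<partial>count_space UNIV) = ennreal C"
      using gw_nonneg E_val
      by (simp add: gwE_def sz_def ennreal_mult_nat)
    show ?thesis unfolding gw_expected_size_def using gw_nonneg C_pos
      by (subst infsum_NI) (auto simp: eq)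
  qed
  ultimately have R: "typical_rerooting_gw \<alpha> A = enn2real X * (1 - m)"
    unfolding typical_rerooting_gw_def K_def by simp
  show "tgwt \<alpha> A = typical_rerooting_gw \<alpha> A" using L R by simp
qed

end
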